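(* Let $A$ be an $m\times m$ minimally non-totally unimodular matrix and let $x\in\mathbb{Q}^m$. The matrix $A'=[A\;x]$ obtained by adding the column $x$ to $A$ is totally equimodular if and only if $x=\mathbf 0$ or $x=\pm A^j$ for some column $A^j$ of $A$.
   Context: A matrix is totally unimodular if all its square submatrices have determinant in $\{0,\pm1\}$; it is minimally non-totally unimodular if it is not totally unimodular but all its proper submatrices are. An $m\times n$ matrix is equimodular if it has full row rank and all its nonzero $m\times m$ minors have the same absolute value; a matrix is totally equimodular if every set of linearly independent rows forms an equimodular matrix. *)

theory Defs
  imports "Jordan_Normal_Form.DL_Submatrix" "Jordan_Normal_Form.Determinant"
begin

definition totally_unimodular :: "rat mat \<Rightarrow> bool" where
  "totally_unimodular A \<longleftrightarrow>
     (\<forall>I J. I \<subseteq> {..<dim_row A} \<longrightarrow> J \<subseteq> {..<dim_col A} \<longrightarrow> card I = card J \<longrightarrow>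
        det (submatrix A I J) \<in> {-1, 0, 1})"

definition minimally_non_TU :: "rat mat \<Rightarrow> bool" where
  "minimally_non_TU A \<longleftrightarrow> \<not> totally_unimodular A \<and>
     (\<forall>I J. I \<subseteq> {..<dim_row A} \<longrightarrow> J \<subseteq> {..<dim_col A} \<longrightarrow>
        (I \<noteq> {..<dim_row A} \<or> J \<noteq> {..<dim_col A}) \<longrightarrow>
        totally_unimodular (submatrix A I J))"

definition rows_lin_indep :: "rat mat \<Rightarrow> nat set \<Rightarrow> bool" where
  "rows_lin_indep A I \<longleftrightarrow> I \<subseteq> {..<dim_row A} \<and>
     (\<forall>c. (\<forall>j<dim_col A. (\<Sum>i\<in>I. c i * A $$ (i, j)) = 0) \<longrightarrow> (\<forall>i\<in>I. c i = 0))"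

definition full_row_rank :: "rat mat \<Rightarrow> bool" where
  "full_row_rank A \<longleftrightarrow> rows_lin_indep A {..<dim_row A}"

definition equimodular :: "rat mat \<Rightarrow> bool" where
  "equimodular A \<longleftrightarrow> full_row_rank A \<and>
     (\<forall>J1 J2. J1 \<subseteq> {..<dim_col A} \<longrightarrow> J2 \<subseteq> {..<dim_col A} \<longrightarrow>
        card J1 = dim_row A \<longrightarrow> card J2 = dim_row A \<longrightarrow>
        det (submatrix A UNIV J1) \<noteq> 0 \<longrightarrow> det (submatrix A UNIV J2) \<noteq> 0 \<longrightarrow>
        \<bar>det (submatrix A UNIV J1)\<bar> = \<bar>det (submatrix A UNIV J2)\<bar>)"

definition totally_equimodular :: "rat mat \<Rightarrow> bool" where
  "totally_equimodular A \<longleftrightarrow>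
     (\<forall>I. rows_lin_indep A I \<longrightarrow> equimodular (submatrix A I UNIV))"

definition add_col :: "rat mat \<Rightarrow> rat vec \<Rightarrow> rat mat" where
  "add_col A x = mat (dim_row A) (dim_col A + 1)
     (\<lambda>(i, j). if j < dim_col A then A $$ (i, j) else x $ i)"

end

theory Submission
  imports Defs
begin

definition mnr :: "'a mat \<Rightarrow> nat \<Rightarrow> (nat \<Rightarrow> nat) \<Rightarrow> (nat \<Rightarrow> nat) \<Rightarrow> 'a mat" where
  "mnr B r f g = mat r r (\<lambda>(i,j). B $$ (f i, g j))"

lemma mnr_carrier[simp]: "mnr B r f g \<in> carrier_mat r r" and mnr_dims[simp]: "dim_row (mnr B r f g) = r" "dim_col (mnr B r f g) = r"
  and mnr_index[simp]: "i < r \<Longrightarrow> j < r \<Longrightarrow> mnr B r f g $$ (i,j) = B $$ (f i, g j)"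
  unfolding mnr_def by auto

lemma abs_signof: "\<bar>(signof p :: 'a :: linordered_idom)\<bar> = 1"
  by (cases p rule: sign_cases) auto

lemma det_perm_both:
  fixes C :: "'a :: comm_ring_1 mat"
  assumes C: "C \<in> carrier_mat n n" and p: "p permutes {0..<n}" and q: "q permutes {0..<n}"
  shows "det (mat n n (\<lambda>(i,j). C $$ (p i, q j))) = signof p * signof q * det C"
proof -
  define C1 where "C1 = mat n n (\<lambda>(i,j). C $$ (i, q j))"
  have C1: "C1 \<in> carrier_mat n n" unfolding C1_def by auto
  have qi: "\<And>i. i < n \<Longrightarrow> q i < n" using q permutes_in_image by fastforce
  have pi: "\<And>i. i < n \<Longrightarrow> p i < n" using p permutes_in_image by fastforce
  have "transpose_mat C1 = mat n n (\<lambda>(i,j). transpose_mat C $$ (q i, j))"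
    using C qi unfolding C1_def by (auto intro!: eq_matI)
  hence "det (transpose_mat C1) = signof q * det (transpose_mat C)"
    using det_permute_rows[OF _ q, of "transpose_mat C"] C by auto
  hence d1: "det C1 = signof q * det C" using det_transpose C C1 by metis
  have "mat n n (\<lambda>(i,j). C $$ (p i, q j)) = mat n n (\<lambda>(i,j). C1 $$ (p i, j))"
    using pi unfolding C1_def by (auto intro!: eq_matI)
  hence "det (mat n n (\<lambda>(i,j). C $$ (p i, q j))) = signof p * det C1"
    using det_permute_rows[OF C1 p] by simp
  thus ?thesis using d1 by simp
qed

lemma perm_from_bij:
  fixes r :: nat and f f' :: "nat \<Rightarrow> 'b"
  assumes f: "bij_betw f {..<r} I" and f': "bij_betw f' {..<r} I"
  obtains p where "p permutes {0..<r}" "\<And>i. i < r \<Longrightarrow> f' (p i) = f i"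
proof -
  define p where "p = (\<lambda>i. if i < r then inv_into {..<r} f' (f i) else i)"
  have b: "bij_betw (inv_into {..<r} f' \<circ> f) {..<r} {..<r}"
    using bij_betw_trans[OF f bij_betw_inv_into[OF f']] .
  have "bij_betw p {..<r} {..<r}"
    using b by (rule bij_betw_cong[THEN iffD1, rotated]) (auto simp: p_def)
  hence "p permutes {..<r}" by (intro bij_imp_permutes) (auto simp: p_def)
  hence "p permutes {0..<r}" by (metis atLeast0LessThan)
  moreover have "f' (p i) = f i" if "i < r" for i
  proof -
    have "f i \<in> f' ` {..<r}" using f f' that by (auto simp: bij_betw_def)
    thus ?thesis using that by (simp add: p_def f_inv_into_f)
  qed
  ultimately show ?thesis using that by blast
qed

lemma abs_det_reindex:
  fixes B :: "'a :: linordered_idom mat"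
  assumes "bij_betw f {..<r} I" "bij_betw f' {..<r} I" "bij_betw g {..<r} J" "bij_betw g' {..<r} J"
  shows "\<bar>det (mnr B r f g)\<bar> = \<bar>det (mnr B r f' g')\<bar>"
proof -
  obtain p where p: "p permutes {0..<r}" "\<And>i. i < r \<Longrightarrow> f' (p i) = f i" using perm_from_bij assms(1,2) by metis
  obtain q where q: "q permutes {0..<r}" "\<And>i. i < r \<Longrightarrow> g' (q i) = g i" using perm_from_bij assms(3,4) by metis
  have pi: "\<And>i. i < r \<Longrightarrow> p i < r" using p permutes_in_image by fastforce
  have qi: "\<And>i. i < r \<Longrightarrow> q i < r" using q permutes_in_image by fastforce
  have "mnr B r f g = mat r r (\<lambda>(i,j). mnr B r f' g' $$ (p i, q j))"
    using pi qi p q by (auto intro!: eq_matI)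
  hence "det (mnr B r f g) = signof p * signof q * det (mnr B r f' g')"
    using det_perm_both[OF mnr_carrier p(1) q(1)] by simp
  thus ?thesis by (simp add: abs_mult abs_signof)
qed

lemma bij_pick: assumes "finite I" shows "bij_betw (pick I) {..<card I} I"
proof -
  have inj: "inj_on (pick I) {..<card I}"
    by (intro inj_onI) (metis lessThan_iff nat_neq_iff pick_mono_le)
  have "pick I ` {..<card I} \<subseteq> I" using pick_in_set_le by auto
  moreover have "card (pick I ` {..<card I}) = card I" using card_image[OF inj] by simp
  ultimately have "pick I ` {..<card I} = I" using assms by (simp add: card_subset_eq)
  thus ?thesis using inj by (simp add: bij_betw_def)
qed

lemma pick_lessThan: "i < n \<Longrightarrow> pick {..<n} i = i"
proof -
  assume i: "i < n"
  have "card {a\<in>{..<n}. a < i} = i" using i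
    by (metis (no_types, lifting) card_lessThan lessThan_iff less_trans mem_Collect_eq subsetI subset_antisym lessThan_def)
  thus ?thesis using pick_card_in_set[of i "{..<n}"] i by simp
qed

lemma submatrix_mnr:
  assumes "I \<subseteq> {..<dim_row B}" "J \<subseteq> {..<dim_col B}" "card I = r" "card J = r"
  shows "submatrix B I J = mnr B r (pick I) (pick J)"
proof -
  have "{i. i<dim_row B \<and> i\<in>I} = I" "{j. j<dim_col B \<and> j\<in>J} = J" using assms by auto
  thus ?thesis unfolding submatrix_def mnr_def using assms by simp
qed

lemma submatrix_full: assumes "S \<in> carrier_mat r c" shows "submatrix S {..<r} {..<c} = S"
proof -
  have e: "{i. i<r \<and> i\<in>{..<r}} = {..<r}" "{j. j<c \<and> j\<in>{..<c}} = {..<c}" by auto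
  show ?thesis using assms unfolding submatrix_def e by (auto intro!: eq_matI simp: pick_lessThan)
qed

lemma submatrix_sub_UNIV: "submatrix (submatrix B I UNIV) UNIV J = submatrix B I J"
proof -
  have d: "dim_col (submatrix B I UNIV) = dim_col B" unfolding submatrix_def by simp
  show ?thesis
  proof (rule eq_matI)
    show "dim_row (submatrix (submatrix B I UNIV) UNIV J) = dim_row (submatrix B I J)"
      by (simp add: dim_submatrix)
    show "dim_col (submatrix (submatrix B I UNIV) UNIV J) = dim_col (submatrix B I J)"
      by (simp add: dim_submatrix d)
    fix i j assume ij: "i < dim_row (submatrix B I J)" "j < dim_col (submatrix B I J)"
    have j2: "pick J j < dim_col B" using ij pick_le by (simp add: dim_submatrix)
    show "submatrix (submatrix B I UNIV) UNIV J $$ (i, j) = submatrix B I J $$ (i, j)"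
      using ij j2 by (simp add: submatrix_def pick_UNIV)
  qed
qed

lemma bij_insert_index: assumes "i < Suc n" shows "bij_betw (insert_index i) {..<n} ({..<Suc n} - {i})"
proof -
  have "inj_on (insert_index i) {..<n}" by (intro inj_onI) (auto simp: insert_index_def split: if_splits)
  moreover have "insert_index i ` {..<n} = {..<Suc n} - {i}"
    using insert_index_image[OF assms] by (simp add: atLeast0LessThan)
  ultimately show ?thesis by (simp add: bij_betw_def)
qed

lemma mat_delete_mnr: "A \<in> carrier_mat n n \<Longrightarrow> mat_delete A i j = mnr A (n-1) (insert_index i) (insert_index j)"
  unfolding mat_delete_def mnr_def insert_index_def by auto


lemma col_lin:
  fixes M :: "'a :: comm_ring_1 mat" and N :: "'b \<Rightarrow> 'a mat"
  assumes M: "M \<in> carrier_mat n n" and N: "\<And>t. t \<in> T \<Longrightarrow> N t \<in> carrier_mat n n"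
    and c0: "c0 < n"
    and other: "\<And>t r j. t \<in> T \<Longrightarrow> r < n \<Longrightarrow> j < n \<Longrightarrow> j \<noteq> c0 \<Longrightarrow> N t $$ (r,j) = M $$ (r,j)"
    and lin: "\<And>r. r < n \<Longrightarrow> M $$ (r,c0) = (\<Sum>t\<in>T. z t * N t $$ (r,c0))"
  shows "det M = (\<Sum>t\<in>T. z t * det (N t))"
proof -
  have cof: "cofactor (N t) r c0 = cofactor M r c0" if t: "t \<in> T" and r: "r < n" for t r
  proof -
    have "mat_delete (N t) r c0 = mat_delete M r c0"
      using M N[OF t] other[OF t] c0
      by (intro eq_matI) (auto simp: mat_delete_def)
    thus ?thesis unfolding cofactor_def by simp
  qed
  have "det M = (\<Sum>r<n. M $$ (r,c0) * cofactor M r c0)" by (rule laplace_expansion_column[OF M c0])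
  also have "\<dots> = (\<Sum>r<n. \<Sum>t\<in>T. z t * (N t $$ (r,c0) * cofactor (N t) r c0))"
    by (intro sum.cong refl) (simp add: lin cof sum_distrib_right mult.assoc)
  also have "\<dots> = (\<Sum>t\<in>T. z t * (\<Sum>r<n. N t $$ (r,c0) * cofactor (N t) r c0))"
    by (subst sum.swap) (simp add: sum_distrib_left)
  also have "\<dots> = (\<Sum>t\<in>T. z t * det (N t))"
    by (intro sum.cong refl) (simp add: laplace_expansion_column[OF N c0])
  finally show ?thesis .
qed

lemma det_Ints:
  fixes B :: "'a :: comm_ring_1 mat"
  assumes B: "B \<in> carrier_mat n n" and ints: "\<And>i j. i < n \<Longrightarrow> j < n \<Longrightarrow> B $$ (i,j) \<in> \<int>"
  shows "det B \<in> \<int>"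
proof -
  have "signof p * (\<Prod>i = 0..<n. B $$ (i, p i)) \<in> \<int>" if p: "p permutes {0..<n}" for p
  proof -
    have "p i < n" if "i < n" for i using p permutes_in_image that by fastforce
    hence "(\<Prod>i = 0..<n. B $$ (i, p i)) \<in> \<int>" using ints by (intro Ints_prod) auto
    moreover have "(signof p :: 'a) \<in> \<int>" by (cases p rule: sign_cases) auto
    ultimately show ?thesis by (metis Ints_mult)
  qed
  thus ?thesis unfolding det_def'[OF B] by (intro Ints_sum) auto
qed

lemma solve_exists:
  fixes A :: "'a :: field mat"
  assumes A: "A \<in> carrier_mat n n" and d: "det A \<noteq> 0" and b: "b \<in> carrier_vec n"
  shows "\<exists>z \<in> carrier_vec n. A *\<^sub>v z = b"
proof -
  define z where "z = (1 / det A) \<cdot>\<^sub>v (adj_mat A *\<^sub>v b)"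
  have adj: "adj_mat A \<in> carrier_mat n n" "A * adj_mat A = det A \<cdot>\<^sub>m 1\<^sub>m n" using adj_mat[OF A] by auto
  have "A *\<^sub>v z = (1 / det A) \<cdot>\<^sub>v (A *\<^sub>v (adj_mat A *\<^sub>v b))"
    unfolding z_def using A adj b by (simp add: mult_mat_vec)
  also have "A *\<^sub>v (adj_mat A *\<^sub>v b) = (A * adj_mat A) *\<^sub>v b" by (rule assoc_mult_mat_vec[OF A adj(1) b, symmetric])
  also have "\<dots> = (det A \<cdot>\<^sub>m 1\<^sub>m n) *\<^sub>v b" using adj by simp
  also have "\<dots> = det A \<cdot>\<^sub>v b" using adj b
  proof (intro eq_vecI)
    fix i assume i: "i < dim_vec (det A \<cdot>\<^sub>v b)"
    hence i': "i < n" using b by simp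
    have "(det A \<cdot>\<^sub>m 1\<^sub>m n *\<^sub>v b) $ i = (\<Sum>j<n. (if i = j then det A else 0) * b $ j)"
      using i' b by (simp add: scalar_prod_def one_mat_def atLeast0LessThan, intro sum.cong, auto)
    also have "\<dots> = (\<Sum>j<n. (if i = j then det A * b $ j else 0))" by (intro sum.cong) auto
    also have "\<dots> = det A * b $ i" using i' by simp
    finally show "(det A \<cdot>\<^sub>m 1\<^sub>m n *\<^sub>v b) $ i = (det A \<cdot>\<^sub>v b) $ i" using i' b by simp
  qed (use b in simp)
  finally have "A *\<^sub>v z = b" using d by (simp add: smult_smult_assoc)
  moreover have "z \<in> carrier_vec n" unfolding z_def using adj b by simp
  ultimately show ?thesis by blast
qed

lemma int_abs_lt1: assumes "(q :: rat) \<in> \<int>" "\<bar>q\<bar> < 1" shows "q = 0"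
proof -
  obtain k where k: "q = of_int k" using assms(1) Ints_cases by blast
  hence "\<bar>k\<bar> < 1" using assms(2) by (metis of_int_abs of_int_less_1_iff)
  thus ?thesis using k by simp
qed


lemma replace_col_unit:
  fixes A :: "'a :: comm_ring_1 mat"
  assumes A: "A \<in> carrier_mat n n" and a: "a < n" and j: "j < n"
  shows "det (replace_col A (unit_vec n a) j) = cofactor A a j"
proof -
  have C: "replace_col A (unit_vec n a) j \<in> carrier_mat n n" using A by (simp add: replace_col_def)
  have cof: "cofactor (replace_col A (unit_vec n a) j) r j = cofactor A r j" if "r < n" for r
  proof -
    have "mat_delete (replace_col A (unit_vec n a) j) r j = mat_delete A r j"
      using A by (intro eq_matI) (auto simp: mat_delete_def replace_col_def)
    thus ?thesis unfolding cofactor_def by simp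
  qed
  have "det (replace_col A (unit_vec n a) j) = (\<Sum>r<n. replace_col A (unit_vec n a) j $$ (r,j) * cofactor (replace_col A (unit_vec n a) j) r j)"
    by (rule laplace_expansion_column[OF C j])
  also have "\<dots> = (\<Sum>r<n. (if r = a then cofactor A a j else 0))"
    using A j by (intro sum.cong refl, simp only: cof lessThan_iff, auto simp: replace_col_def unit_vec_def)
  also have "\<dots> = cofactor A a j" using a by simp
  finally show ?thesis .
qed

lemma in101_abs: "((a::rat) \<in> {-1,0,1}) = (\<bar>a\<bar> \<in> {0,1})"
  by (cases "a \<ge> 0") auto

locale mntu =
  fixes A :: "rat mat" and m :: nat
  assumes A: "A \<in> carrier_mat m m" and mn: "minimally_non_TU A"
begin

lemma dimA[simp]: "dim_row A = m" "dim_col A = m" using A by auto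

lemma minor_sub:
  assumes I: "I \<subseteq> {..<m}" and J: "J \<subseteq> {..<m}" and c: "card I = card J"
    and pr: "I \<noteq> {..<m} \<or> J \<noteq> {..<m}"
  shows "det (submatrix A I J) \<in> {-1,0,1}"
proof -
  have "I \<subseteq> {..<dim_row A}" "J \<subseteq> {..<dim_col A}" "I \<noteq> {..<dim_row A} \<or> J \<noteq> {..<dim_col A}"
    using I J pr A by auto
  hence TU: "totally_unimodular (submatrix A I J)" using mn unfolding minimally_non_TU_def by blast
  have e: "{i. i<dim_row A \<and> i\<in>I} = I" "{j. j<dim_col A \<and> j\<in>J} = J" using I J A by auto
  have S: "submatrix A I J \<in> carrier_mat (card I) (card J)"
  proof -
    have "dim_row (submatrix A I J) = card I" "dim_col (submatrix A I J) = card J"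
      by (simp only: dim_submatrix e)+
    thus ?thesis unfolding carrier_mat_def by simp
  qed
  have "{..<card I} \<subseteq> {..<dim_row (submatrix A I J)}" "{..<card J} \<subseteq> {..<dim_col (submatrix A I J)}"
    "card {..<card I} = card {..<card J}" using S c by auto
  hence "det (submatrix (submatrix A I J) {..<card I} {..<card J}) \<in> {-1,0,1}"
    using TU unfolding totally_unimodular_def by blast
  thus ?thesis using submatrix_full[OF S] by simp
qed

lemma detA: "det A \<notin> {-1,0,1}"
proof
  assume d: "det A \<in> {-1,0,1}"
  have "totally_unimodular A" unfolding totally_unimodular_def
  proof (intro allI impI)
    fix I J assume I: "I \<subseteq> {..<dim_row A}" and J: "J \<subseteq> {..<dim_col A}" and c: "card I = card J"
    show "det (submatrix A I J) \<in> {-1,0,1}"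
    proof (cases "I \<noteq> {..<m} \<or> J \<noteq> {..<m}")
      case True thus ?thesis using minor_sub I J c by simp
    next
      case False
      hence "submatrix A I J = A" using submatrix_full[OF A] by simp
      thus ?thesis using d by simp
    qed
  qed
  thus False using mn unfolding minimally_non_TU_def by simp
qed

lemma detA_nz: "det A \<noteq> 0" using detA by auto

lemma proper_minor:
  assumes f: "bij_betw f {..<r} I" and g: "bij_betw g {..<r} J" and I: "I \<subseteq> {..<m}" and J: "J \<subseteq> {..<m}"
    and r: "r < m"
  shows "det (mnr A r f g) \<in> {-1,0,1}"
proof -
  have fin: "finite I" "finite J" using I J finite_subset by auto
  have cI: "card I = r" and cJ: "card J = r" using bij_betw_same_card[OF f] bij_betw_same_card[OF g] by auto
  have "\<bar>det (mnr A r f g)\<bar> = \<bar>det (mnr A r (pick I) (pick J))\<bar>"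
    by (rule abs_det_reindex[OF f _ g]) (use bij_pick[OF fin(1)] bij_pick[OF fin(2)] cI cJ in auto)
  also have "mnr A r (pick I) (pick J) = submatrix A I J" using submatrix_mnr[of I A J r] I J cI cJ by simp
  finally have e: "\<bar>det (mnr A r f g)\<bar> = \<bar>det (submatrix A I J)\<bar>" .
  have "I \<noteq> {..<m}" using cI r by auto
  hence "det (submatrix A I J) \<in> {-1,0,1}" using minor_sub I J cI cJ by simp
  thus ?thesis using e unfolding in101_abs by simp
qed

lemma m_pos: "0 < m"
proof (rule ccontr)
  assume "\<not> 0 < m" hence "m = 0" by simp
  hence "det A = 1" using A by simp
  thus False using detA by simp
qed

lemma entries: assumes "2 \<le> m" "i < m" "j < m" shows "A $$ (i,j) \<in> {-1,0,1}"
proof -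
  have b1: "bij_betw (\<lambda>_. i) {..<1::nat} {i}" "bij_betw (\<lambda>_. j) {..<1::nat} {j}" by (auto simp: bij_betw_def inj_on_def)
  have "det (mnr A 1 (\<lambda>_. i) (\<lambda>_. j)) \<in> {-1,0,1}"
    by (rule proper_minor[OF b1(1) b1(2)]) (use assms in auto)
  moreover have "det (mnr A 1 (\<lambda>_. i) (\<lambda>_. j)) = A $$ (i,j)" by (simp add: det_single)
  ultimately show ?thesis by simp
qed

lemma entries_Ints: assumes "2 \<le> m" "i < m" "j < m" shows "A $$ (i,j) \<in> \<int>"
  using entries[OF assms] by auto

lemma det_gt1: assumes "2 \<le> m" shows "1 < \<bar>det A\<bar>"
proof -
  have "det A \<in> \<int>" by (intro det_Ints[OF A] entries_Ints[OF assms])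
  then obtain k where k: "det A = of_int k" using Ints_cases by blast
  have "k \<notin> {-1,0,1}" using detA k by auto
  hence "1 < \<bar>k\<bar>" by (cases "k \<ge> 0") auto
  hence "(1::rat) < of_int \<bar>k\<bar>" by linarith
  thus ?thesis using k by simp
qed

lemma minor_del: assumes "a < m" "b < m" shows "det (mat_delete A a b) \<in> {-1,0,1}"
proof -
  have s: "Suc (m - 1) = m" using m_pos by simp
  have b1: "bij_betw (insert_index a) {..<m-1} ({..<m} - {a})"
    using bij_insert_index[of a "m-1"] assms(1) s by simp
  have b2: "bij_betw (insert_index b) {..<m-1} ({..<m} - {b})"
    using bij_insert_index[of b "m-1"] assms(2) s by simp
  have "det (mnr A (m-1) (insert_index a) (insert_index b)) \<in> {-1,0,1}"
    by (rule proper_minor[OF b1 b2]) (use m_pos in auto)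
  thus ?thesis using mat_delete_mnr[OF A] by simp
qed

lemma det_mat_delete_abs: assumes "a < m" "b < m" "det (mat_delete A a b) \<noteq> 0"
  shows "\<bar>det (mat_delete A a b)\<bar> = 1"
  using minor_del[OF assms(1,2)] assms(3) by auto

lemma abs_cofactor: "\<bar>cofactor A a b\<bar> = \<bar>det (mat_delete A a b)\<bar>"
  unfolding cofactor_def by (simp add: abs_mult)

lemma cof_nonzero: assumes m2: "2 \<le> m" and a: "a < m" and b: "b < m"
  shows "det (mat_delete A a b) \<noteq> 0"
proof
  assume z: "det (mat_delete A a b) = 0"
  obtain w where w: "w \<in> carrier_vec m" "A *\<^sub>v w = unit_vec m a"
    using solve_exists[OF A detA_nz, of "unit_vec m a"] by auto
  have wj: "w $ j * det A = cofactor A a j" if j: "j < m" for j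
    using cramer_lemma_mat[OF A w(1) j] w(2) replace_col_unit[OF A a j] by simp
  have wb: "w $ b = 0" using wj[OF b] z detA_nz unfolding cofactor_def by simp
  have wabs: "\<bar>w $ j\<bar> < 1" if j: "j < m" for j
  proof (rule ccontr)
    assume "\<not> \<bar>w $ j\<bar> < 1"
    hence "1 * \<bar>det A\<bar> \<le> \<bar>w $ j\<bar> * \<bar>det A\<bar>" by (intro mult_right_mono) auto
    also have "\<dots> = \<bar>det (mat_delete A a j)\<bar>" using wj[OF j] abs_cofactor[of a j] abs_mult[of "w$j" "det A"] by simp
    also have "\<dots> \<le> 1" using minor_del[OF a j] by auto
    finally show False using det_gt1[OF m2] by simp
  qed
  obtain i where i: "i < m" "det (mat_delete A i b) \<noteq> 0"
  proof (rule ccontr)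
    assume "\<not> thesis"
    hence "\<forall>i<m. cofactor A i b = 0" using that unfolding cofactor_def by auto
    hence "det A = 0" using laplace_expansion_column[OF A b] by simp
    thus False using detA_nz by simp
  qed
  define n' where "n' = m - 1"
  have s: "Suc n' = m" using m_pos n'_def by simp
  define R where "R = mat_delete A i b"
  have R: "R \<in> carrier_mat n' n'" unfolding R_def n'_def using mat_delete_carrier[OF A] .
  have Rabs: "\<bar>det R\<bar> = 1" unfolding R_def using det_mat_delete_abs[OF i(1) b i(2)] .
  define w' where "w' = vec n' (\<lambda>c. w $ insert_index b c)"
  define e' where "e' = vec n' (\<lambda>r. (unit_vec m a :: rat vec) $ insert_index i r)"
  have w': "w' \<in> carrier_vec n'" unfolding w'_def by simp
  have bijb: "bij_betw (insert_index b) {..<n'} ({..<m} - {b})" using bij_insert_index[of b n'] b s by simp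
  have ii: "insert_index i r < m" if "r < n'" for r using that s by (simp add: insert_index_def)
  have Rw: "R *\<^sub>v w' = e'"
  proof (intro eq_vecI)
    fix r assume "r < dim_vec e'"
    hence r: "r < n'" unfolding e'_def by simp
    have "(R *\<^sub>v w') $ r = (\<Sum>c<n'. A $$ (insert_index i r, insert_index b c) * w $ insert_index b c)"
      using r unfolding R_def w'_def n'_def
      by (simp add: scalar_prod_def atLeast0LessThan mat_delete_def insert_index_def)
    also have "\<dots> = (\<Sum>j\<in>{..<m} - {b}. A $$ (insert_index i r, j) * w $ j)"
      by (rule sum.reindex_bij_betw[OF bijb])
    also have "\<dots> = (\<Sum>j<m. A $$ (insert_index i r, j) * w $ j)"
      using wb b by (subst sum.remove[of "{..<m}" b]) auto
    also have "\<dots> = (A *\<^sub>v w) $ insert_index i r"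
      using ii[OF r] w(1) by (simp add: scalar_prod_def atLeast0LessThan)
    also have "\<dots> = e' $ r" using w(2) r unfolding e'_def by simp
    finally show "(R *\<^sub>v w') $ r = e' $ r" .
  qed (use R e'_def in simp)
  have wint: "w $ insert_index b c = 0" if c: "c < n'" for c
  proof -
    have "det (replace_col R (R *\<^sub>v w') c) = w' $ c * det R" by (rule cramer_lemma_mat[OF R w' c])
    moreover have "det (replace_col R e' c) \<in> \<int>"
    proof (rule det_Ints)
      show "replace_col R e' c \<in> carrier_mat n' n'" using R by (simp add: replace_col_def)
      fix r j assume rj: "r < n'" "j < n'"
      show "replace_col R e' c $$ (r, j) \<in> \<int>"
      proof (cases "j = c")
        case True thus ?thesis using rj R ii[OF rj(1)] unfolding replace_col_def e'_def by (auto simp: unit_vec_def)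
      next
        case False
        have "R $$ (r,j) = A $$ (insert_index i r, insert_index b j)"
          using rj unfolding R_def n'_def by (simp add: mat_delete_def insert_index_def)
        moreover have "insert_index b j < m" using rj s by (simp add: insert_index_def)
        ultimately have "R $$ (r,j) \<in> \<int>" using entries_Ints[OF m2 ii[OF rj(1)]] by simp
        thus ?thesis using False rj R unfolding replace_col_def by simp
      qed
    qed
    ultimately have "w' $ c * det R \<in> \<int>" using Rw by simp
    moreover have "det R = 1 \<or> det R = -1" using Rabs by auto
    ultimately have "w' $ c \<in> \<int>" by (auto simp: Ints_minus[of "- _", simplified])
    moreover have "\<bar>w' $ c\<bar> < 1" using wabs[of "insert_index b c"] c s unfolding w'_def
      by (simp add: insert_index_def)
    ultimately have "w' $ c = 0" by (rule int_abs_lt1)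
    thus ?thesis using c unfolding w'_def by simp
  qed
  have "w = 0\<^sub>v m"
  proof (intro eq_vecI)
    fix j assume "j < dim_vec (0\<^sub>v m :: rat vec)"
    hence j: "j < m" by simp
    show "w $ j = 0\<^sub>v m $ j"
    proof (cases "j = b")
      case True thus ?thesis using wb j by simp
    next
      case False
      define c where "c = (if j < b then j else j - 1)"
      have "c < n'" "insert_index b c = j" using False j s b unfolding c_def insert_index_def by auto
      thus ?thesis using wint j by fastforce
    qed
  qed (use w in simp)
  hence "A *\<^sub>v w = 0\<^sub>v m" using A by (intro eq_vecI) (auto simp: scalar_prod_def)
  hence "unit_vec m a $ a = (0::rat)" using w(2) a by simp
  thus False using a by simp
qed


end


lemma bij_subst:
  assumes h: "bij_betw h D S" and a: "a \<in> S" and b: "b \<notin> S"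
  shows "bij_betw (\<lambda>c. if h c = a then b else h c) D (insert b (S - {a}))"
proof -
  have hS: "\<And>c. c \<in> D \<Longrightarrow> h c \<in> S" using h by (auto simp: bij_betw_def)
  have inj: "inj_on h D" using h by (auto simp: bij_betw_def)
  have "inj_on (\<lambda>c. if h c = a then b else h c) D"
  proof (intro inj_onI)
    fix c1 c2 assume c: "c1 \<in> D" "c2 \<in> D" and e: "(if h c1 = a then b else h c1) = (if h c2 = a then b else h c2)"
    have "h c1 = h c2" using e hS[OF c(1)] hS[OF c(2)] b by (auto split: if_splits)
    thus "c1 = c2" using inj c by (auto simp: inj_on_def)
  qed
  moreover have "(\<lambda>c. if h c = a then b else h c) ` D = insert b (S - {a})"
  proof (intro equalityI subsetI)
    fix y assume "y \<in> (\<lambda>c. if h c = a then b else h c) ` D"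
    then obtain c where "c \<in> D" "y = (if h c = a then b else h c)" by auto
    thus "y \<in> insert b (S - {a})" using hS by auto
  next
    fix y assume y: "y \<in> insert b (S - {a})"
    have surj: "h ` D = S" using h by (auto simp: bij_betw_def)
    show "y \<in> (\<lambda>c. if h c = a then b else h c) ` D"
    proof (cases "y = b")
      case True
      obtain c where "c \<in> D" "h c = a" using a surj by auto
      thus ?thesis using True by (auto intro!: image_eqI[of _ _ c])
    next
      case False
      hence "y \<in> S" "y \<noteq> a" using y by auto
      then obtain c where "c \<in> D" "h c = y" using surj by auto
      thus ?thesis using \<open>y \<noteq> a\<close> by (auto intro!: image_eqI[of _ _ c])
    qed
  qed
  ultimately show ?thesis by (simp add: bij_betw_def)
qed

lemma add_col_dims[simp]: "dim_row (add_col A x) = dim_row A" "dim_col (add_col A x) = Suc (dim_col A)"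
  unfolding add_col_def by auto

lemma add_col_index:
  "i < dim_row A \<Longrightarrow> j < dim_col A \<Longrightarrow> add_col A x $$ (i,j) = A $$ (i,j)"
  "i < dim_row A \<Longrightarrow> add_col A x $$ (i, dim_col A) = x $ i"
  unfolding add_col_def by auto

locale mntx = mntu +
  fixes x :: "rat vec"
  assumes x: "dim_vec x = m"
begin

abbreviation "Ax \<equiv> add_col A x"

lemma Ax_A: "i < m \<Longrightarrow> j < m \<Longrightarrow> Ax $$ (i,j) = A $$ (i,j)" using add_col_index(1)[of i A j x] by simp
lemma Ax_x: "i < m \<Longrightarrow> Ax $$ (i,m) = x $ i" using add_col_index(2)[of i A x] by simp

lemma rows_indep: assumes I: "I \<subseteq> {..<m}" shows "rows_lin_indep Ax I"
  unfolding rows_lin_indep_def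
proof (intro conjI allI impI)
  show "I \<subseteq> {..<dim_row Ax}" using I by simp
  fix c assume h: "\<forall>j<dim_col Ax. (\<Sum>i\<in>I. c i * Ax $$ (i, j)) = 0"
  define v where "v = vec m (\<lambda>i. if i \<in> I then c i else 0)"
  have v: "v \<in> carrier_vec m" unfolding v_def by simp
  have "transpose_mat A *\<^sub>v v = 0\<^sub>v m"
  proof (intro eq_vecI)
    fix j assume "j < dim_vec (0\<^sub>v m :: rat vec)"
    hence j: "j < m" by simp
    have "(transpose_mat A *\<^sub>v v) $ j = (\<Sum>i<m. A $$ (i,j) * v $ i)"
      using j A v by (simp add: scalar_prod_def atLeast0LessThan)
    also have "\<dots> = (\<Sum>i<m. if i \<in> I then c i * Ax $$ (i,j) else 0)"
      using j by (intro sum.cong refl) (auto simp: v_def Ax_A)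
    also have "\<dots> = (\<Sum>i\<in>{i\<in>{..<m}. i \<in> I}. c i * Ax $$ (i,j))"
      by (rule sum.inter_filter[symmetric]) simp
    also have "{i\<in>{..<m}. i \<in> I} = I" using I by auto
    also have "(\<Sum>i\<in>I. c i * Ax $$ (i,j)) = 0" using h j by simp
    finally show "(transpose_mat A *\<^sub>v v) $ j = 0\<^sub>v m $ j" using j by simp
  qed (use A in simp)
  moreover have "det (transpose_mat A) \<noteq> 0" using det_transpose[OF A] detA_nz by simp
  ultimately have "v = 0\<^sub>v m" using det_0_iff_vec_prod_zero_field[of "transpose_mat A" m] A v by auto
  thus "\<forall>i\<in>I. c i = 0"
  proof (intro ballI)
    fix i assume "v = 0\<^sub>v m" "i \<in> I"
    hence "v $ i = 0" using I by auto
    thus "c i = 0" using \<open>i \<in> I\<close> I unfolding v_def by auto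
  qed
qed

lemma TE_use:
  assumes TE: "totally_equimodular Ax" and I: "I \<subseteq> {..<m}"
    and f: "bij_betw f {..<r} I" and g1: "bij_betw g1 {..<r} J1" and g2: "bij_betw g2 {..<r} J2"
    and J1: "J1 \<subseteq> {..<Suc m}" and J2: "J2 \<subseteq> {..<Suc m}"
    and n1: "det (mnr Ax r f g1) \<noteq> 0" and n2: "det (mnr Ax r f g2) \<noteq> 0"
  shows "\<bar>det (mnr Ax r f g1)\<bar> = \<bar>det (mnr Ax r f g2)\<bar>"
proof -
  define S where "S = submatrix Ax I UNIV"
  have eq: "equimodular S" using TE rows_indep[OF I] unfolding totally_equimodular_def S_def by blast
  have finI: "finite I" using I finite_subset by blast
  have cI: "card I = r" using bij_betw_same_card[OF f] by simp
  have c1: "card J1 = r" using bij_betw_same_card[OF g1] by simp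
  have c2: "card J2 = r" using bij_betw_same_card[OF g2] by simp
  have fin1: "finite J1" "finite J2" using J1 J2 finite_subset by auto
  have dS: "dim_row S = r" "dim_col S = Suc m"
  proof -
    have "{i. i < dim_row Ax \<and> i \<in> I} = I" using I by auto
    thus "dim_row S = r" unfolding S_def dim_submatrix using cI by simp
    have "{j. j < dim_col Ax \<and> j \<in> UNIV} = {..<Suc m}" by auto
    thus "dim_col S = Suc m" unfolding S_def dim_submatrix by simp
  qed
  have sub: "submatrix S UNIV J = mnr Ax r (pick I) (pick J)" if "J \<subseteq> {..<Suc m}" "card J = r" for J
    unfolding S_def submatrix_sub_UNIV using that I cI by (intro submatrix_mnr) auto
  have re: "\<bar>det (mnr Ax r f g)\<bar> = \<bar>det (mnr Ax r (pick I) (pick J))\<bar>"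
    if "bij_betw g {..<r} J" "finite J" for g J
    by (rule abs_det_reindex[OF f _ that(1)]) (use bij_pick[OF finI] bij_pick[OF that(2)] cI bij_betw_same_card[OF that(1)] in auto)
  have "\<bar>det (submatrix S UNIV J1)\<bar> = \<bar>det (submatrix S UNIV J2)\<bar>"
    using eq unfolding equimodular_def
    apply (elim conjE)
    apply (erule allE[of _ J1], erule allE[of _ J2])
    using J1 J2 c1 c2 dS sub[OF J1 c1] sub[OF J2 c2] re[OF g1 fin1(1)] re[OF g2 fin1(2)] n1 n2
    by auto
  thus ?thesis using sub[OF J1 c1] sub[OF J2 c2] re[OF g1 fin1(1)] re[OF g2 fin1(2)] by simp
qed


lemma mnr_A_id: "mnr A m id id = A" using A by (intro eq_matI) auto

lemma bij_id_m: "bij_betw id {..<m} {..<m}" by simp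

lemma full_I: assumes "I \<subseteq> {..<m}" "card I = m" shows "I = {..<m}"
  using assms by (simp add: card_subset_eq)

lemma K:
  assumes hx: "x = 0\<^sub>v m \<or> (\<exists>j<m. x = col A j \<or> x = - col A j)"
    and I: "I \<subseteq> {..<m}" and J: "J \<subseteq> {..<Suc m}"
    and f: "bij_betw f {..<r} I" and g: "bij_betw g {..<r} J"
    and nz: "det (mnr Ax r f g) \<noteq> 0"
  shows "\<bar>det (mnr Ax r f g)\<bar> = (if r < m then 1 else \<bar>det A\<bar>)"
proof -
  have cI: "card I = r" using bij_betw_same_card[OF f] by simp
  have cJ: "card J = r" using bij_betw_same_card[OF g] by simp
  have rm: "r \<le> m" using card_mono[OF _ I] cI by simp
  have fI: "\<And>a. a < r \<Longrightarrow> f a < m" using f I by (auto simp: bij_betw_def)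
  have gJ: "\<And>b. b < r \<Longrightarrow> g b < Suc m" using g J by (auto simp: bij_betw_def)
  have final: "\<bar>det (mnr A r f g')\<bar> = (if r < m then 1 else \<bar>det A\<bar>)"
    if g': "bij_betw g' {..<r} J'" and J': "J' \<subseteq> {..<m}" and nz': "det (mnr A r f g') \<noteq> 0" for g' J'
  proof (cases "r < m")
    case True
    thus ?thesis using proper_minor[OF f g' I J' True] nz' by auto
  next
    case False
    hence r: "r = m" using rm by simp
    have "I = {..<m}" using full_I[OF I] cI r by simp
    moreover have "J' = {..<m}" using full_I[OF J'] bij_betw_same_card[OF g'] r by simp
    ultimately have "\<bar>det (mnr A m f g')\<bar> = \<bar>det (mnr A m id id)\<bar>"
      using f g' r by (intro abs_det_reindex[of f m "{..<m}" id g' "{..<m}" id]) auto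
    thus ?thesis using r mnr_A_id by simp
  qed
  show ?thesis
  proof (cases "m \<in> J")
    case False
    hence J': "J \<subseteq> {..<m}" using J by (auto simp: less_Suc_eq subset_eq)
    hence gJ': "\<And>b. b < r \<Longrightarrow> g b < m" using g by (auto simp: bij_betw_def)
    have "mnr Ax r f g = mnr A r f g" by (intro eq_matI) (auto simp: Ax_A fI gJ')
    thus ?thesis using final[OF g J'] nz by simp
  next
    case True
    then obtain c0 where c0: "c0 < r" "g c0 = m" using g by (auto simp: bij_betw_def)
    have ginj: "\<And>b. b < r \<Longrightarrow> g b = m \<Longrightarrow> b = c0" using g c0 by (auto simp: bij_betw_def inj_on_def)
    have gless: "\<And>b. b < r \<Longrightarrow> b \<noteq> c0 \<Longrightarrow> g b < m"
      using gJ ginj by (metis less_Suc_eq)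
    from hx show ?thesis
    proof
      assume x0: "x = 0\<^sub>v m"
      have "det (mnr Ax r f g) = (\<Sum>t\<in>{}. (1::rat) * det ((\<lambda>_. mnr Ax r f g) t))"
      proof (rule col_lin[OF mnr_carrier _ c0(1)])
        fix a assume "a < r"
        thus "mnr Ax r f g $$ (a, c0) = (\<Sum>t\<in>{}. 1 * (\<lambda>_. mnr Ax r f g) t $$ (a, c0))"
          using c0 fI Ax_x[of "f a"] x0 by simp
      qed auto
      thus ?thesis using nz by simp
    next
      assume "\<exists>j<m. x = col A j \<or> x = - col A j"
      then obtain j where j: "j < m" and xj: "x = col A j \<or> x = - col A j" by blast
      define s :: rat where "s = (if x = col A j then 1 else -1)"
      have xs: "x $ i = s * A $$ (i,j)" if "i < m" for i
        using xj that j A unfolding s_def by (auto simp: col_def)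
      have s1: "\<bar>s\<bar> = 1" unfolding s_def by simp
      define g' where "g' = (\<lambda>b. if g b = m then j else g b)"
      define N where "N = mnr A r f g'"
      have g'c0: "g' c0 = j" using c0 unfolding g'_def by simp
      have g'o: "\<And>b. b < r \<Longrightarrow> b \<noteq> c0 \<Longrightarrow> g' b = g b" using ginj unfolding g'_def by auto
      have dM: "det (mnr Ax r f g) = (\<Sum>t\<in>{()}. s * det ((\<lambda>_. N) t))"
      proof (rule col_lin[OF mnr_carrier _ c0(1)])
        fix t a b assume "t \<in> {()}" "a < r" "b < r" "b \<noteq> c0"
        thus "N $$ (a, b) = mnr Ax r f g $$ (a, b)"
          unfolding N_def using g'o gless fI by (simp add: Ax_A)
      next
        fix a assume a: "a < r"
        show "mnr Ax r f g $$ (a, c0) = (\<Sum>t\<in>{()}. s * (\<lambda>_. N) t $$ (a, c0))"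
          unfolding N_def using a c0 g'c0 fI xs by (simp add: Ax_x)
      qed (simp add: N_def)
      hence dM': "det (mnr Ax r f g) = s * det N" by simp
      show ?thesis
      proof (cases "j \<in> J")
        case True
        then obtain c1 where c1: "c1 < r" "g c1 = j" using g by (auto simp: bij_betw_def)
        have "c1 \<noteq> c0" using c1 c0 j by auto
        moreover have "col N c0 = col N c1"
          using c0 c1 g'c0 g'o[OF c1(1) \<open>c1 \<noteq> c0\<close>] unfolding N_def by (intro eq_vecI) auto
        ultimately have "det N = 0" using det_identical_columns[OF _ _ c0(1) c1(1), of N] unfolding N_def by simp
        thus ?thesis using dM' nz by simp
      next
        case False
        have bij': "bij_betw g' {..<r} (insert j (J - {m}))" unfolding g'_def by (rule bij_subst[OF g True False])
        have sub': "insert j (J - {m}) \<subseteq> {..<m}" using J j by auto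
        have "det N \<noteq> 0" using dM' nz by auto
        hence "\<bar>det N\<bar> = (if r < m then 1 else \<bar>det A\<bar>)" using final[OF bij' sub'] unfolding N_def by simp
        thus ?thesis using dM' s1 by (simp add: abs_mult)
      qed
    qed
  qed
qed


lemma te_of_x:
  assumes hx: "x = 0\<^sub>v m \<or> (\<exists>j<m. x = col A j \<or> x = - col A j)"
  shows "totally_equimodular Ax"
  unfolding totally_equimodular_def
proof (intro allI impI)
  fix I assume ri: "rows_lin_indep Ax I"
  have I: "I \<subseteq> {..<m}" using ri unfolding rows_lin_indep_def by simp
  have finI: "finite I" using I finite_subset by blast
  define r where "r = card I"
  have bI: "bij_betw (pick I) {..<r} I" using bij_pick[OF finI] unfolding r_def .
  define S where "S = submatrix Ax I UNIV"
  have eI: "{i. i < dim_row Ax \<and> i \<in> I} = I" using I by auto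
  have eU: "{j. j < dim_col Ax \<and> j \<in> UNIV} = {..<Suc m}" by auto
  have dS: "dim_row S = r" "dim_col S = Suc m" unfolding S_def dim_submatrix eI eU r_def by auto
  have Sij: "S $$ (a, j) = Ax $$ (pick I a, j)" if "a < r" "j < Suc m" for a j
    unfolding S_def using submatrix_index[of a Ax I j UNIV] that eI eU r_def by (simp add: pick_UNIV)
  have sub: "submatrix S UNIV J = mnr Ax r (pick I) (pick J)" if "J \<subseteq> {..<Suc m}" "card J = r" for J
    unfolding S_def submatrix_sub_UNIV using that I r_def by (intro submatrix_mnr) auto
  show "equimodular S"
    unfolding equimodular_def full_row_rank_def rows_lin_indep_def
  proof (intro conjI allI impI)
    show "{..<dim_row S} \<subseteq> {..<dim_row S}" by simp
  next
    fix c assume h: "\<forall>j<dim_col S. (\<Sum>i\<in>{..<dim_row S}. c i * S $$ (i, j)) = 0"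
    define c' where "c' = (\<lambda>i. c (inv_into {..<r} (pick I) i))"
    have cc: "c' (pick I a) = c a" if "a < r" for a
      using bI that unfolding c'_def by (simp add: bij_betw_def inv_into_f_f)
    have "\<forall>j<dim_col Ax. (\<Sum>i\<in>I. c' i * Ax $$ (i, j)) = 0"
    proof (intro allI impI)
      fix j assume "j < dim_col Ax"
      hence j: "j < Suc m" by simp
      have "(\<Sum>i\<in>I. c' i * Ax $$ (i, j)) = (\<Sum>a<r. c' (pick I a) * Ax $$ (pick I a, j))"
        by (rule sum.reindex_bij_betw[OF bI, symmetric])
      also have "\<dots> = (\<Sum>a<r. c a * S $$ (a, j))" by (intro sum.cong refl) (simp add: cc Sij j)
      also have "\<dots> = 0" using h j dS by simp
      finally show "(\<Sum>i\<in>I. c' i * Ax $$ (i, j)) = 0" .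
    qed
    hence "\<forall>i\<in>I. c' i = 0" using ri unfolding rows_lin_indep_def by blast
    thus "\<forall>i\<in>{..<dim_row S}. c i = 0"
    proof (intro ballI)
      fix a assume "\<forall>i\<in>I. c' i = 0" "a \<in> {..<dim_row S}"
      hence a: "a < r" using dS by simp
      hence "pick I a \<in> I" using bI by (auto simp: bij_betw_def)
      thus "c a = 0" using cc[OF a] \<open>\<forall>i\<in>I. c' i = 0\<close> by simp
    qed
  next
    fix J1 J2 assume a: "J1 \<subseteq> {..<dim_col S}" "J2 \<subseteq> {..<dim_col S}" "card J1 = dim_row S" "card J2 = dim_row S"
      "det (submatrix S UNIV J1) \<noteq> 0" "det (submatrix S UNIV J2) \<noteq> 0"
    have J: "J1 \<subseteq> {..<Suc m}" "J2 \<subseteq> {..<Suc m}" "card J1 = r" "card J2 = r" using a dS by auto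
    have fin: "finite J1" "finite J2" using J finite_subset by auto
    have b1: "bij_betw (pick J1) {..<r} J1" using bij_pick[OF fin(1)] J by simp
    have b2: "bij_betw (pick J2) {..<r} J2" using bij_pick[OF fin(2)] J by simp
    show "\<bar>det (submatrix S UNIV J1)\<bar> = \<bar>det (submatrix S UNIV J2)\<bar>"
      using K[OF hx I J(1) bI b1] K[OF hx I J(2) bI b2] sub[OF J(1) J(3)] sub[OF J(2) J(4)] a(5,6) by simp
  qed
qed



lemma zk:
  assumes TE: "totally_equimodular Ax" and z: "z \<in> carrier_vec m" and Az: "A *\<^sub>v z = x" and k: "k < m"
  shows "z $ k = 1 \<or> z $ k = 0 \<or> z $ k = -1"
proof (cases "z $ k = 0")
  case False
  have cr: "det (replace_col A x k) = z $ k * det A" using cramer_lemma_mat[OF A z k] Az by simp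
  define gk where "gk = (\<lambda>j. if id j = k then m else id j)"
  have bg: "bij_betw gk {..<m} (insert m ({..<m} - {k}))"
    unfolding gk_def by (rule bij_subst[OF bij_id_m]) (use k in auto)
  have e1: "replace_col A x k = mnr Ax m id gk"
  proof (intro eq_matI)
    fix i j assume ij: "i < dim_row (mnr Ax m id gk)" "j < dim_col (mnr Ax m id gk)"
    hence ij: "i < m" "j < m" by auto
    show "replace_col A x k $$ (i, j) = mnr Ax m id gk $$ (i, j)"
    proof (cases "j = k")
      case True
      thus ?thesis using ij A by (simp add: replace_col_def gk_def Ax_x)
    next
      case False
      thus ?thesis using ij A by (simp add: replace_col_def gk_def Ax_A)
    qed
  next
    show "dim_row (replace_col A x k) = dim_row (mnr Ax m id gk)" using A by (simp add: replace_col_def)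
    show "dim_col (replace_col A x k) = dim_col (mnr Ax m id gk)" using A by (simp add: replace_col_def)
  qed
  have e2: "mnr Ax m id id = A" using A by (intro eq_matI) (auto simp: Ax_A)
  have n1: "det (mnr Ax m id gk) \<noteq> 0" using cr False detA_nz unfolding e1[symmetric] by simp
  have n2: "det (mnr Ax m id id) \<noteq> 0" unfolding e2 by (rule detA_nz)
  have J1: "insert m ({..<m} - {k}) \<subseteq> {..<Suc m}" by auto
  have J2: "{..<m} \<subseteq> {..<Suc m}" by auto
  have "\<bar>det (mnr Ax m id gk)\<bar> = \<bar>det (mnr Ax m id id)\<bar>"
    by (rule TE_use[OF TE order_refl bij_id_m bg bij_id_m J1 J2 n1 n2])
  hence "\<bar>det (replace_col A x k)\<bar> = \<bar>det A\<bar>" unfolding e1 e2 .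
  hence "\<bar>z $ k\<bar> * \<bar>det A\<bar> = 1 * \<bar>det A\<bar>" unfolding cr abs_mult by simp
  hence "\<bar>z $ k\<bar> = 1" using detA_nz by (metis abs_eq_0 mult_right_cancel)
  thus ?thesis by arith
qed simp

lemma contra:
  assumes TE: "totally_equimodular Ax" and z: "z \<in> carrier_vec m" and Az: "A *\<^sub>v z = x"
    and k: "k < m" and l: "l < m" and kl: "k \<noteq> l" and zk0: "z $ k \<noteq> 0" and zl0: "z $ l \<noteq> 0"
  shows False
proof -
  have m2: "2 \<le> m" using k l kl by linarith
  have zk1: "z $ k = 1 \<or> z $ k = -1" using zk[OF TE z Az k] zk0 by auto
  have zl1: "z $ l = 1 \<or> z $ l = -1" using zk[OF TE z Az l] zl0 by auto
  define P where "P = replace_col A x k"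
  have P: "P \<in> carrier_mat m m" unfolding P_def using A by (simp add: replace_col_def)
  have dP: "det P = z $ k * det A" unfolding P_def using cramer_lemma_mat[OF A z k] Az by simp
  have dP0: "det P \<noteq> 0" using dP zk0 detA_nz by simp
  define n' where "n' = m - 1"
  have s: "Suc n' = m" using m_pos n'_def by simp
  have ins_lt: "\<And>a c. a < m \<Longrightarrow> c < n' \<Longrightarrow> insert_index a c < m" using s by (auto simp: insert_index_def)
  have bl: "bij_betw (insert_index l) {..<n'} ({..<m} - {l})" using bij_insert_index[of l n'] l s by simp
  have bk: "bij_betw (insert_index k) {..<n'} ({..<m} - {k})" using bij_insert_index[of k n'] k s by simp
  define c0 where "c0 = (if k < l then k else k - 1)"
  have c0: "c0 < n'" "insert_index l c0 = k" using k l kl s unfolding c0_def insert_index_def by auto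
  have ck: "\<And>c. c < n' \<Longrightarrow> insert_index l c = k \<Longrightarrow> c = c0"
    using c0 bl by (auto simp: bij_betw_def inj_on_def)
  have del0: "det (mat_delete P i l) = 0" if i: "i < m" for i
  proof -
    have bi: "bij_betw (insert_index i) {..<n'} ({..<m} - {i})" using bij_insert_index[of i n'] i s by simp
    define g where "g = (\<lambda>c. if insert_index l c = k then m else insert_index l c)"
    have bg: "bij_betw g {..<n'} (insert m ({..<m} - {l} - {k}))"
      unfolding g_def by (rule bij_subst[OF bl]) (use k kl in auto)
    define Q where "Q = mat_delete P i l"
    have Q1: "Q = mnr Ax n' (insert_index i) g"
      unfolding Q_def mat_delete_mnr[OF P] n'_def[symmetric]
    proof (intro eq_matI)
      fix r c assume rc: "r < dim_row (mnr Ax n' (insert_index i) g)" "c < dim_col (mnr Ax n' (insert_index i) g)"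
      hence rc: "r < n'" "c < n'" by auto
      show "mnr P n' (insert_index i) (insert_index l) $$ (r, c) = mnr Ax n' (insert_index i) g $$ (r, c)"
        using rc ins_lt[OF i rc(1)] ins_lt[OF l rc(2)] A x
        by (simp add: P_def replace_col_def g_def Ax_A Ax_x)
    qed auto
    define R where "R = mnr A n' (insert_index i) (insert_index l)"
    have R: "R = mat_delete A i l" unfolding R_def using mat_delete_mnr[OF A] n'_def by simp
    have dR: "\<bar>det R\<bar> = 1" using det_mat_delete_abs[OF i l cof_nonzero[OF m2 i l]] R by simp
    have R2: "mnr Ax n' (insert_index i) (insert_index l) = R"
      unfolding R_def using ins_lt[OF i] ins_lt[OF l] by (intro eq_matI) (auto simp: Ax_A)
    have Qabs: "\<bar>det Q\<bar> = 1" if "det Q \<noteq> 0"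
    proof -
      have "\<bar>det (mnr Ax n' (insert_index i) g)\<bar> = \<bar>det (mnr Ax n' (insert_index i) (insert_index l))\<bar>"
        by (rule TE_use[OF TE _ bi bg bl]) (use that Q1 R2 dR l in auto)
      thus ?thesis using Q1 R2 dR by simp
    qed
    define N where "N = (\<lambda>t. mnr A n' (insert_index i) (\<lambda>c. if insert_index l c = k then t else insert_index l c))"
    have lin: "det Q = (\<Sum>t<m. z $ t * det (N t))"
    proof (rule col_lin[of Q n' "{..<m}" N c0])
      show "Q \<in> carrier_mat n' n'" unfolding Q1 by simp
      show "\<And>t. t \<in> {..<m} \<Longrightarrow> N t \<in> carrier_mat n' n'" unfolding N_def by simp
      show "c0 < n'" by (rule c0(1))
    next
      fix t r c assume trc: "t \<in> {..<m}" "r < n'" "c < n'" "c \<noteq> c0"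
      have "insert_index l c \<noteq> k" using ck trc by blast
      thus "N t $$ (r, c) = Q $$ (r, c)" unfolding Q1 N_def g_def
        using trc ins_lt[OF i trc(2)] ins_lt[OF l trc(3)] by (simp add: Ax_A)
    next
      fix r assume r: "r < n'"
      have "Q $$ (r, c0) = x $ insert_index i r" unfolding Q1 g_def using r c0 ins_lt[OF i r] by (simp add: Ax_x)
      also have "\<dots> = (A *\<^sub>v z) $ insert_index i r" using Az by simp
      also have "\<dots> = (\<Sum>t<m. A $$ (insert_index i r, t) * z $ t)"
        using ins_lt[OF i r] z A by (simp add: scalar_prod_def atLeast0LessThan)
      also have "\<dots> = (\<Sum>t<m. z $ t * N t $$ (r, c0))"
        unfolding N_def using r c0 by (intro sum.cong refl) simp
      finally show "Q $$ (r, c0) = (\<Sum>t\<in>{..<m}. z $ t * N t $$ (r, c0))" .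
    qed
    have Nk: "N k = R" unfolding N_def R_def by (intro eq_matI) auto
    have Nz: "det (N t) = 0" if t: "t < m" "t \<noteq> k" "t \<noteq> l" for t
    proof -
      define c1 where "c1 = (if t < l then t else t - 1)"
      have c1: "c1 < n'" "insert_index l c1 = t" using t l s unfolding c1_def insert_index_def by auto
      have "c1 \<noteq> c0" using c1 c0 t by auto
      moreover have "col (N t) c0 = col (N t) c1"
        unfolding N_def using c0 c1 t by (intro eq_vecI) auto
      ultimately show ?thesis using det_identical_columns[OF _ _ c0(1) c1(1), of "N t"] unfolding N_def by simp
    qed
    have Nl: "\<bar>det (N l)\<bar> = 1"
    proof -
      have bh: "bij_betw (\<lambda>c. if insert_index l c = k then l else insert_index l c) {..<n'} (insert l ({..<m} - {l} - {k}))"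
        by (rule bij_subst[OF bl]) (use k kl in auto)
      have e: "insert l ({..<m} - {l} - {k}) = {..<m} - {k}" using l kl by auto
      have "\<bar>det (N l)\<bar> = \<bar>det (mnr A n' (insert_index i) (insert_index k))\<bar>"
        unfolding N_def by (rule abs_det_reindex[OF bi bi _ bk]) (use bh e in simp)
      also have "mnr A n' (insert_index i) (insert_index k) = mat_delete A i k"
        using mat_delete_mnr[OF A] n'_def by simp
      finally show ?thesis using det_mat_delete_abs[OF i k cof_nonzero[OF m2 i k]] by simp
    qed
    have "(\<Sum>t<m. z $ t * det (N t)) = (\<Sum>t\<in>{k,l}. z $ t * det (N t))"
      by (rule sum.mono_neutral_right) (use k l Nz in auto)
    also have "\<dots> = z $ k * det R + z $ l * det (N l)" using kl Nk by simp
    finally have dQ: "det Q = z $ k * det R + z $ l * det (N l)" using lin by simp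
    have "det R = 1 \<or> det R = -1" using dR by auto
    moreover have "det (N l) = 1 \<or> det (N l) = -1" using Nl by auto
    ultimately have "det Q = 0 \<or> \<bar>det Q\<bar> = 2" using dQ zk1 zl1 by auto
    thus ?thesis using Qabs unfolding Q_def by fastforce
  qed
  have "det P = (\<Sum>i<m. P $$ (i,l) * cofactor P i l)" by (rule laplace_expansion_column[OF P l])
  also have "\<dots> = 0" using del0 unfolding cofactor_def by simp
  finally show False using dP0 by simp
qed

lemma fwd:
  assumes TE: "totally_equimodular Ax"
  shows "x = 0\<^sub>v m \<or> (\<exists>j<m. x = col A j \<or> x = - col A j)"
proof -
  have xc: "x \<in> carrier_vec m" by (rule carrier_vecI[OF x])
  obtain z where z: "z \<in> carrier_vec m" and Az: "A *\<^sub>v z = x" using solve_exists[OF A detA_nz xc] by blast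
  have xi0: "x $ i = (\<Sum>t<m. A $$ (i,t) * z $ t)" if i: "i < m" for i
  proof -
    have "x $ i = (A *\<^sub>v z) $ i" using Az by simp
    also have "\<dots> = row A i \<bullet> z" using i A by simp
    also have "\<dots> = (\<Sum>t<m. A $$ (i,t) * z $ t)" using i A z by (simp add: scalar_prod_def atLeast0LessThan)
    finally show ?thesis .
  qed
  show ?thesis
  proof (cases "\<forall>k<m. z $ k = 0")
    case True
    have "x = 0\<^sub>v m"
    proof (intro eq_vecI)
      fix i assume "i < dim_vec (0\<^sub>v m :: rat vec)"
      hence i: "i < m" by simp
      show "x $ i = 0\<^sub>v m $ i" using xi0[OF i] True i by simp
    qed (use x in simp)
    thus ?thesis by simp
  next
    case False
    then obtain k where k: "k < m" "z $ k \<noteq> 0" by auto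
    have others: "z $ l = 0" if "l < m" "l \<noteq> k" for l
      using contra[OF TE z Az k(1) that(1) that(2)[symmetric] k(2)] by blast
    have zk1: "z $ k = 1 \<or> z $ k = -1" using zk[OF TE z Az k(1)] k(2) by blast
    have xi: "x $ i = z $ k * A $$ (i,k)" if i: "i < m" for i
    proof -
      have "x $ i = (\<Sum>t<m. A $$ (i,t) * z $ t)" by (rule xi0[OF i])
      also have "\<dots> = (\<Sum>t\<in>{k}. A $$ (i,t) * z $ t)"
        by (rule sum.mono_neutral_right) (use k others in auto)
      finally show ?thesis by simp
    qed
    have dc: "dim_vec (col A k) = m" using A by simp
    from zk1 have "x = col A k \<or> x = - col A k"
    proof
      assume z1: "z $ k = 1"
      have "x = col A k"
      proof (intro eq_vecI)
        fix i assume "i < dim_vec (col A k)"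
        hence i: "i < m" using dc by simp
        show "x $ i = col A k $ i" using xi[OF i] z1 i A k by (simp add: col_def)
      qed (use x dc in simp)
      thus ?thesis by simp
    next
      assume z1: "z $ k = -1"
      have "x = - col A k"
      proof (intro eq_vecI)
        fix i assume "i < dim_vec (- col A k)"
        hence i: "i < m" using dc by simp
        show "x $ i = (- col A k) $ i" using xi[OF i] z1 i A k by (simp add: col_def)
      qed (use x dc in simp)
      thus ?thesis by simp
    qed
    thus ?thesis using k by auto
  qed
qed

end

theorem mainTheorem9:
  fixes A :: "rat mat" and x :: "rat vec" and m :: nat
  assumes "A \<in> carrier_mat m m"
    and "dim_vec x = m"
    and "minimally_non_TU A"
  shows "totally_equimodular (add_col A x) \<longleftrightarrow>
         (x = 0\<^sub>v m \<or> (\<exists>j<m. x = col A j \<or> x = - col A j))"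
proof -
  interpret mntx A m x by unfold_locales (use assms in auto)
  show ?thesis using fwd te_of_x by blast
qed

end
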